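(* Let $r\ge1$ and let $\tau$ be a permutation of $F^r$ with $\tau(\mathbf 0)=\mathbf 0$. Then for any $a,b\in F^r$ the permutation $(\sigma_a|\sigma_b)$ of the points, defined by $(\{c\},\emptyset)\mapsto(\{c+a\},\emptyset)$ and $(\emptyset,\{c\})\mapsto(\emptyset,\{c+b\})$ for all $c\in F^r$, belongs to $\mathrm{Aut}(SQS_\tau)$. In particular, $\mathrm{Aut}(SQS_\tau)$ either acts transitively on the points of $SQS_\tau$ or has exactly two orbits on points, namely $\{(\{a\},\emptyset):a\in F^r\}$ and $\{(\emptyset,\{a\}):a\in F^r\}$.
   Context: $F=\mathrm{GF}(2)$, $\mathbf 0$ is the all-zero vector. The point set consists of the $2^{r+1}$ symbols $(\{a\},\emptyset)$ and $(\emptyset,\{a\})$, $a\in F^r$; a pair $(X,Y)$ with $X,Y\subseteq F^r$ denotes the set of points $\{(\{x\},\emptyset):x\in X\}\cup\{(\emptyset,\{y\}):y\in Y\}$. $SQS_\tau=Q_0\cup Q_1\cup Q_\tau$ where $Q_0=\{(\{a,b,c,d\},\emptyset): a,b,c,d\in F^r \text{ pairwise distinct}, a+b+c+d=\mathbf 0\}$, $Q_1=\{(\emptyset,\{a,b,c,d\}): a,b,c,d\in F^r \text{ pairwise distinct}, a+b+c+d=\mathbf 0\}$, $Q_\tau=\{(\{a,c\},\{b,d\}): a,b,c,d\in F^r, \tau(a+c)=b+d\neq\mathbf 0\}$. $\mathrm{Aut}(SQS_\tau)$ is the group of permutations of the point set mapping the set of quadruples onto itself. *)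

theory Defs
  imports "HOL-Library.Z2" "HOL-Analysis.Finite_Cartesian_Product"
begin

text \<open>F = GF(2) is the type bit; F^r is bit ^ 'n with CARD('n) = r.
  Points: Inl c stands for ({c},{}) and Inr c for ({},{c}).\<close>

type_synonym 'n point = "(bit ^ 'n) + (bit ^ 'n)"

definition Q0 :: "('n::finite) point set set" where
  "Q0 = {{Inl a, Inl b, Inl c, Inl d} | a b c d.
           distinct [a, b, c, d] \<and> a + b + c + d = 0}"

definition Q1 :: "('n::finite) point set set" where
  "Q1 = {{Inr a, Inr b, Inr c, Inr d} | a b c d.
           distinct [a, b, c, d] \<and> a + b + c + d = 0}"

definition Qtau :: "(bit ^ ('n::finite) \<Rightarrow> bit ^ 'n) \<Rightarrow> 'n point set set" where
  "Qtau \<tau> = {{Inl a, Inl c, Inr b, Inr d} | a b c d.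
           \<tau> (a + c) = b + d \<and> b + d \<noteq> 0}"

definition SQS :: "(bit ^ ('n::finite) \<Rightarrow> bit ^ 'n) \<Rightarrow> 'n point set set" where
  "SQS \<tau> = Q0 \<union> Q1 \<union> Qtau \<tau>"

definition Aut :: "(bit ^ ('n::finite) \<Rightarrow> bit ^ 'n) \<Rightarrow> ('n point \<Rightarrow> 'n point) set" where
  "Aut \<tau> = {\<pi>. bij \<pi> \<and> (\<lambda>B. \<pi> ` B) ` SQS \<tau> = SQS \<tau>}"

definition sigma_pair :: "bit ^ ('n::finite) \<Rightarrow> bit ^ 'n \<Rightarrow> 'n point \<Rightarrow> 'n point" where
  "sigma_pair a b = case_sum (\<lambda>c. Inl (c + a)) (\<lambda>c. Inr (c + b))"

definition point_orbits :: "(bit ^ ('n::finite) \<Rightarrow> bit ^ 'n) \<Rightarrow> 'n point set set" where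
  "point_orbits \<tau> = {{g x | g. g \<in> Aut \<tau>} | x. True}"

end

theory Submission
  imports Defs
begin

lemma bit_self_add: "(y::bit) + y = 0"
  by (cases y) auto

lemma vec_self_add: "(x::bit^'n::finite) + x = 0"
  by (simp add: vec_eq_iff bit_self_add)

lemma vec_add_cancel: "(x::bit^'n::finite) + a + a = x"
  by (metis add.assoc add.right_neutral vec_self_add)

lemma sp_invol: "sigma_pair a b (sigma_pair a b p) = p"
  by (cases p) (simp_all add: sigma_pair_def vec_add_cancel)

lemma sp_Inl[simp]: "sigma_pair a b (Inl c) = Inl (c + a)"
  and sp_Inr[simp]: "sigma_pair a b (Inr c) = Inr (c + b)"
  by (simp_all add: sigma_pair_def)

lemma sp_maps: "(\<lambda>B. sigma_pair a b ` B) ` SQS \<tau> \<subseteq> SQS \<tau>"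
proof
  fix X assume "X \<in> (\<lambda>B. sigma_pair a b ` B) ` SQS \<tau>"
  then obtain B where B: "B \<in> SQS \<tau>" and X: "X = sigma_pair a b ` B" by blast
  from B consider "B \<in> Q0" | "B \<in> Q1" | "B \<in> Qtau \<tau>" unfolding SQS_def by blast
  then show "X \<in> SQS \<tau>"
  proof cases
    case 1
    then obtain p q r s where B: "B = {Inl p, Inl q, Inl r, Inl s}"
      and d: "distinct [p, q, r, s]" and sm: "p + q + r + s = 0" unfolding Q0_def by blast
    have "X = {Inl (p+a), Inl (q+a), Inl (r+a), Inl (s+a)}" using X B by simp
    moreover have "distinct [p+a, q+a, r+a, s+a]" using d by auto
    moreover have "(p+a) + (q+a) + (r+a) + (s+a) = 0"
    proof -
      have "(p+a) + (q+a) + (r+a) + (s+a) = (p+q+r+s) + (a+a) + (a+a)"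
        by (simp add: algebra_simps)
      then show ?thesis using sm by (simp add: vec_self_add)
    qed
    ultimately have "X \<in> Q0" unfolding Q0_def by blast
    then show ?thesis unfolding SQS_def by blast
  next
    case 2
    then obtain p q r s where B: "B = {Inr p, Inr q, Inr r, Inr s}"
      and d: "distinct [p, q, r, s]" and sm: "p + q + r + s = 0" unfolding Q1_def by blast
    have "X = {Inr (p+b), Inr (q+b), Inr (r+b), Inr (s+b)}" using X B by simp
    moreover have "distinct [p+b, q+b, r+b, s+b]" using d by auto
    moreover have "(p+b) + (q+b) + (r+b) + (s+b) = 0"
    proof -
      have "(p+b) + (q+b) + (r+b) + (s+b) = (p+q+r+s) + (b+b) + (b+b)"
        by (simp add: algebra_simps)
      then show ?thesis using sm by (simp add: vec_self_add)
    qed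
    ultimately have "X \<in> Q1" unfolding Q1_def by blast
    then show ?thesis unfolding SQS_def by blast
  next
    case 3
    then obtain p q r s where B: "B = {Inl p, Inl r, Inr q, Inr s}"
      and e: "\<tau> (p + r) = q + s" and nz: "q + s \<noteq> 0" unfolding Qtau_def by blast
    have X': "X = {Inl (p+a), Inl (r+a), Inr (q+b), Inr (s+b)}" using X B by simp
    have e1: "(p+a) + (r+a) = p + r"
    proof -
      have "(p+a) + (r+a) = (p+r) + (a+a)" by (simp add: algebra_simps)
      then show ?thesis by (simp add: vec_self_add)
    qed
    have e2: "(q+b) + (s+b) = q + s"
    proof -
      have "(q+b) + (s+b) = (q+s) + (b+b)" by (simp add: algebra_simps)
      then show ?thesis by (simp add: vec_self_add)
    qed
    have h1: "\<tau> ((p+a) + (r+a)) = (q+b) + (s+b)" by (simp only: e1 e2 e)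
    have h2: "(q+b) + (s+b) \<noteq> 0" by (simp only: e2 nz not_False_eq_True)
    have "X \<in> Qtau \<tau>" unfolding Qtau_def
      by (rule CollectI, intro exI conjI, rule X', rule h1, rule h2)
    then show ?thesis unfolding SQS_def by blast
  qed
qed

lemma sp_Aut: "sigma_pair a b \<in> Aut \<tau>"
proof -
  have bij: "bij (sigma_pair a b)"
    by (metis bijI' sp_invol)
  let ?f = "\<lambda>B. sigma_pair a b ` B"
  have ff: "?f (?f B) = B" for B
    by (simp add: image_image sp_invol)
  have "?f ` (?f ` SQS \<tau>) = (\<lambda>B. ?f (?f B)) ` SQS \<tau>" by (rule image_image)
  also have "\<dots> = (\<lambda>B. B) ` SQS \<tau>" by (simp only: ff)
  finally have "SQS \<tau> = ?f ` (?f ` SQS \<tau>)" by simp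
  also have "\<dots> \<subseteq> ?f ` SQS \<tau>" using sp_maps by (intro image_mono) 
  finally have "?f ` SQS \<tau> = SQS \<tau>" using sp_maps by blast
  then show ?thesis unfolding Aut_def using bij by blast
qed

lemma Aut_inv: assumes "g \<in> Aut \<tau>" shows "inv g \<in> Aut \<tau>"
proof -
  have bg: "bij g" and S: "(\<lambda>B. g ` B) ` SQS \<tau> = SQS \<tau>" using assms unfolding Aut_def by auto
  have bi: "bij (inv g)" using bg by (simp add: bij_imp_bij_inv)
  have ig: "inv g ` (g ` B) = B" for B using bg
    by (rule image_inv_f_f[OF bij_is_inj])
  have "(\<lambda>B. inv g ` B) ` SQS \<tau> = (\<lambda>B. inv g ` B) ` ((\<lambda>B. g ` B) ` SQS \<tau>)" using S by simp
  also have "\<dots> = (\<lambda>B. inv g ` (g ` B)) ` SQS \<tau>" by (rule image_image)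
  also have "\<dots> = (\<lambda>B. B) ` SQS \<tau>" by (simp only: ig)
  also have "\<dots> = SQS \<tau>" by simp
  finally show ?thesis unfolding Aut_def using bi by blast
qed

lemma Aut_comp: assumes "g \<in> Aut \<tau>" "h \<in> Aut \<tau>" shows "g \<circ> h \<in> Aut \<tau>"
proof -
  have "bij g" "bij h" and S: "(\<lambda>B. g ` B) ` SQS \<tau> = SQS \<tau>" "(\<lambda>B. h ` B) ` SQS \<tau> = SQS \<tau>"
    using assms unfolding Aut_def by auto
  then have b: "bij (g \<circ> h)" by (simp add: bij_comp)
  have "(\<lambda>B. (g \<circ> h) ` B) ` SQS \<tau> = (\<lambda>B. g ` B) ` ((\<lambda>B. h ` B) ` SQS \<tau>)"
    by (simp add: image_image image_comp)
  also have "\<dots> = SQS \<tau>" using S by simp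
  finally show ?thesis unfolding Aut_def using b by blast
qed

lemma cc_add: "(c::bit^'n::finite) + (c + d) = d"
  by (simp only: add.assoc[symmetric] vec_self_add add_0_left)

lemma sp_Inl_to: "\<exists>g\<in>Aut \<tau>. g (Inl c) = Inl d"
proof
  show "sigma_pair (c + d) 0 (Inl c) = Inl d" by (simp only: sp_Inl cc_add)
qed (rule sp_Aut)

lemma sp_Inr_to: "\<exists>g\<in>Aut \<tau>. g (Inr c) = Inr d"
proof
  show "sigma_pair 0 (c + d) (Inr c) = Inr d" by (simp only: sp_Inr cc_add)
qed (rule sp_Aut)

theorem proposition5:
  fixes \<tau> :: "bit ^ ('n::finite) \<Rightarrow> bit ^ 'n"
  assumes "bij \<tau>" and "\<tau> 0 = 0"
  shows "(\<forall>a b. sigma_pair a b \<in> Aut \<tau>) \<and>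
         ((\<forall>x y. \<exists>g\<in>Aut \<tau>. g x = y) \<or>
          point_orbits \<tau> = {range Inl, range Inr})"
proof (intro conjI allI sp_Aut)
  show "(\<forall>x y. \<exists>g\<in>Aut \<tau>. g x = y) \<or> point_orbits \<tau> = {range Inl, range Inr}"
  proof (cases "\<exists>g\<in>Aut \<tau>. \<exists>c d. g (Inl c) = Inr d")
    case True
    then obtain g c d where g: "g \<in> Aut \<tau>" and gcd: "g (Inl c) = Inr d" by blast
    have LR: "\<exists>h\<in>Aut \<tau>. h (Inl x) = Inr y" for x y
    proof -
      obtain h1 where h1: "h1 \<in> Aut \<tau>" "h1 (Inl x) = Inl c" using sp_Inl_to by blast
      obtain h2 where h2: "h2 \<in> Aut \<tau>" "h2 (Inr d) = Inr y" using sp_Inr_to by blast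
      have "h2 \<circ> g \<circ> h1 \<in> Aut \<tau>" using h1 h2 g Aut_comp by blast
      moreover have "(h2 \<circ> g \<circ> h1) (Inl x) = Inr y" using h1 h2 gcd by simp
      ultimately show ?thesis by blast
    qed
    have RL: "\<exists>h\<in>Aut \<tau>. h (Inr y) = Inl x" for x y
    proof -
      obtain h where h: "h \<in> Aut \<tau>" "h (Inl x) = Inr y" using LR by blast
      have "bij h" using h unfolding Aut_def by auto
      then have "inv h (Inr y) = Inl x" using h by (metis bij_is_inj inv_f_f)
      then show ?thesis using Aut_inv[OF h(1)] by blast
    qed
    have "\<forall>x y. \<exists>g\<in>Aut \<tau>. g x = y"
    proof (intro allI)
      fix x y :: "'n point"
      show "\<exists>g\<in>Aut \<tau>. g x = y"
      proof (cases x)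
        case (Inl u) note x = this
        show ?thesis
        proof (cases y)
          case (Inl v) then show ?thesis using x sp_Inl_to by simp
        next
          case (Inr v) then show ?thesis using x LR by simp
        qed
      next
        case (Inr u) note x = this
        show ?thesis
        proof (cases y)
          case (Inl v) then show ?thesis using x RL by simp
        next
          case (Inr v) then show ?thesis using x sp_Inr_to by simp
        qed
      qed
    qed
    then show ?thesis by blast
  next
    case False
    have R: "g (Inr c) \<in> range Inr" if g: "g \<in> Aut \<tau>" for g c
    proof (rule ccontr)
      assume "g (Inr c) \<notin> range Inr"
      then obtain d where d: "g (Inr c) = Inl d" by (cases "g (Inr c)") auto
      have "bij g" using g unfolding Aut_def by auto
      then have "inv g (Inl d) = Inr c" using d by (metis bij_is_inj inv_f_f)
      then show False using False Aut_inv[OF g] by blast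
    qed
    have L: "g (Inl c) \<in> range Inl" if g: "g \<in> Aut \<tau>" for g c
      using False g by (cases "g (Inl c)") auto
    have orbL: "{g (Inl c) | g. g \<in> Aut \<tau>} = range Inl" for c
    proof
      show "{g (Inl c) | g. g \<in> Aut \<tau>} \<subseteq> range Inl" using L by blast
      show "range Inl \<subseteq> {g (Inl c) | g. g \<in> Aut \<tau>}"
      proof
        fix z :: "'n point" assume "z \<in> range Inl"
        then obtain d where "z = Inl d" by blast
        moreover obtain g where "g \<in> Aut \<tau>" "g (Inl c) = Inl d" using sp_Inl_to[of \<tau> c d] by blast
        ultimately show "z \<in> {g (Inl c) | g. g \<in> Aut \<tau>}" by (intro CollectI exI[of _ g]) simp
      qed
    qed
    have orbR: "{g (Inr c) | g. g \<in> Aut \<tau>} = range Inr" for c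
    proof
      show "{g (Inr c) | g. g \<in> Aut \<tau>} \<subseteq> range Inr" using R by blast
      show "range Inr \<subseteq> {g (Inr c) | g. g \<in> Aut \<tau>}"
      proof
        fix z :: "'n point" assume "z \<in> range Inr"
        then obtain d where "z = Inr d" by blast
        moreover obtain g where "g \<in> Aut \<tau>" "g (Inr c) = Inr d" using sp_Inr_to[of \<tau> c d] by blast
        ultimately show "z \<in> {g (Inr c) | g. g \<in> Aut \<tau>}" by (intro CollectI exI[of _ g]) simp
      qed
    qed
    have "point_orbits \<tau> = {range Inl, range Inr}"
    proof
      show "point_orbits \<tau> \<subseteq> {range Inl, range Inr}"
      proof
        fix Orb assume "Orb \<in> point_orbits \<tau>"
        then obtain x where O: "Orb = {g x | g. g \<in> Aut \<tau>}" unfolding point_orbits_def by blast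
        show "Orb \<in> {range Inl, range Inr}"
          by (cases x) (simp_all add: O orbL orbR)
      qed
      show "{range Inl, range Inr} \<subseteq> point_orbits \<tau>"
      proof
        fix Orb :: "'n point set" assume "Orb \<in> {range Inl, range Inr}"
        then consider "Orb = {g (Inl 0) | g. g \<in> Aut \<tau>}" | "Orb = {g (Inr 0) | g. g \<in> Aut \<tau>}"
          using orbL[of 0] orbR[of 0] by auto
        then show "Orb \<in> point_orbits \<tau>" unfolding point_orbits_def
          by cases (rule CollectI, rule exI, rule conjI, assumption, rule TrueI)+
      qed
    qed
    then show ?thesis by blast
  qed
qed

end
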